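(* Let $\mathfrak{A}$ be an architecture, $\Sigma$ a finite alphabet and $k\ge1$. There is a deterministic bottom-up tree automaton $\mathcal{A}^{k\text{-stw}}_{\mathsf{acyclic}}$ with $2^{\mathcal{O}(k^2)}$ states which accepts all binary trees $\tau$ such that $\tau$ is a $k$-STT and $G_\tau$ is acyclic.
   Context: Architecture $\mathfrak{A}=(\mathsf{Procs},\mathsf{DS},\mathsf{Writer},\mathsf{Reader})$ with finite sets of processes and data structures. Edge labels are $\Gamma=\{\to\}\cup\mathsf{DS}$ and vertex labels are pairs in $\Sigma\times\mathsf{Procs}$. For $k\ge1$, $k$-STTs are $\tau::=(i,a,p)\mid\mathsf{Add}^\gamma_{i,j}\tau\mid\mathsf{Forget}_i\tau\mid\tau\oplus\tau$ with $a\in\Sigma,p\in\mathsf{Procs},\gamma\in\Gamma,i,j\in[k]$. Semantics $[\![\tau]\!]=(G_\tau,\chi_\tau)$, $G_\tau$ a labelled graph and $\chi_\tau:[k]\to V$ partial injective: $(i,a,p)$ is one vertex labelled $(a,p)$ colored $i$; $\mathsf{Add}^\gamma_{i,j}$ adds the edge $(\chi(i),\chi(j))$ with label $\gamma$ if $i,j\in\mathrm{dom}(\chi)$ (nothing otherwise); $\mathsf{Forget}_i$ removes $i$ from $\mathrm{dom}(\chi)$; $\tau_1\oplus\tau_2$ is the disjoint union, defined (i.e. the term is a legal $k$-STT) only if the color domains are disjoint. Terms are regarded as binary trees over the alphabet $\{\oplus,(i,a,p),\mathsf{Add}^\gamma_{i,j},\mathsf{Forget}_i\}$ (leaves atomic,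 unary nodes $\mathsf{Add}/\mathsf{Forget}$, binary nodes $\oplus$). $G_\tau$ is acyclic if the union of all its edge relations has no cycle. The size of a tree automaton is its number of states. *)

theory Defs
  imports Main
begin

(* Edge labels Gamma = {->} \<union> DS *)
datatype 'd elab = ProcEdge | DSEdge 'd

(* k-STT terms as ranked (binary) trees over the alphabet
   {Plus, (i,a,p), Add^g_{i,j}, Forget_i}; colors are natural numbers,
   the color set is [k] = {1..k}. *)
datatype ('a, 'p, 'd) stt =
    Atom nat 'a 'p
  | AddE "'d elab" nat nat "('a, 'p, 'd) stt"
  | Forget nat "('a, 'p, 'd) stt"
  | Plus "('a, 'p, 'd) stt" "('a, 'p, 'd) stt"

fun over_k :: "nat \<Rightarrow> ('a, 'p, 'd) stt \<Rightarrow> bool" where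
  "over_k k (Atom i a p) = (i \<in> {1..k})"
| "over_k k (AddE g i j t) = (i \<in> {1..k} \<and> j \<in> {1..k} \<and> over_k k t)"
| "over_k k (Forget i t) = (i \<in> {1..k} \<and> over_k k t)"
| "over_k k (Plus t u) = (over_k k t \<and> over_k k u)"

(* Semantics: vertices are positions (bool lists) of atoms in the tree;
   result = (vertices, labelled edges, vertex labelling, coloring chi). *)
type_synonym ('a, 'p, 'd) sem =
  "bool list set \<times> ('d elab \<times> bool list \<times> bool list) set
   \<times> (bool list \<Rightarrow> ('a \<times> 'p) option) \<times> (nat \<Rightarrow> bool list option)"

fun sem :: "('a, 'p, 'd) stt \<Rightarrow> ('a, 'p, 'd) sem" where
  "sem (Atom i a p) = ({[]}, {}, [[] \<mapsto> (a, p)], [i \<mapsto> []])"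
| "sem (AddE g i j t) =
     (let (V, E, lab, chi) = sem t in
      (V, (if i \<in> dom chi \<and> j \<in> dom chi
           then insert (g, the (chi i), the (chi j)) E else E), lab, chi))"
| "sem (Forget i t) =
     (let (V, E, lab, chi) = sem t in (V, E, lab, chi(i := None)))"
| "sem (Plus t u) =
     (let (V1, E1, lab1, chi1) = sem t; (V2, E2, lab2, chi2) = sem u in
      ((Cons False) ` V1 \<union> (Cons True) ` V2,
       (\<lambda>(g, x, y). (g, False # x, False # y)) ` E1
         \<union> (\<lambda>(g, x, y). (g, True # x, True # y)) ` E2,
       (\<lambda>v. case v of [] \<Rightarrow> None | False # w \<Rightarrow> lab1 w | True # w \<Rightarrow> lab2 w),
       (\<lambda>c. case chi1 c of Some v \<Rightarrow> Some (False # v)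
                           | None \<Rightarrow> map_option (Cons True) (chi2 c))))"

definition chi_of :: "('a, 'p, 'd) stt \<Rightarrow> nat \<Rightarrow> bool list option" where
  "chi_of t = (case sem t of (V, E, lab, chi) \<Rightarrow> chi)"

definition edges_of :: "('a, 'p, 'd) stt \<Rightarrow> ('d elab \<times> bool list \<times> bool list) set" where
  "edges_of t = (case sem t of (V, E, lab, chi) \<Rightarrow> E)"

fun legal :: "('a, 'p, 'd) stt \<Rightarrow> bool" where
  "legal (Atom i a p) = True"
| "legal (AddE g i j t) = legal t"
| "legal (Forget i t) = legal t"
| "legal (Plus t u) = (legal t \<and> legal u \<and> dom (chi_of t) \<inter> dom (chi_of u) = {})"

definition is_kSTT :: "nat \<Rightarrow> ('a, 'p, 'd) stt \<Rightarrow> bool" where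
  "is_kSTT k t \<longleftrightarrow> over_k k t \<and> legal t"

definition graph_acyclic :: "('a, 'p, 'd) stt \<Rightarrow> bool" where
  "graph_acyclic t \<longleftrightarrow> acyclic {(x, y). \<exists>g. (g, x, y) \<in> edges_of t}"

datatype 'd usym = UAdd "'d elab" nat nat | UForget nat

fun dta_run :: "(nat \<Rightarrow> 'a \<Rightarrow> 'p \<Rightarrow> nat) \<Rightarrow> ('d usym \<Rightarrow> nat \<Rightarrow> nat)
                 \<Rightarrow> (nat \<Rightarrow> nat \<Rightarrow> nat) \<Rightarrow> ('a, 'p, 'd) stt \<Rightarrow> nat" where
  "dta_run d0 d1 d2 (Atom i a p) = d0 i a p"
| "dta_run d0 d1 d2 (AddE g i j t) = d1 (UAdd g i j) (dta_run d0 d1 d2 t)"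
| "dta_run d0 d1 d2 (Forget i t) = d1 (UForget i) (dta_run d0 d1 d2 t)"
| "dta_run d0 d1 d2 (Plus t u) = d2 (dta_run d0 d1 d2 t) (dta_run d0 d1 d2 u)"

definition dta_wf :: "nat \<Rightarrow> nat set \<Rightarrow> (nat \<Rightarrow> 'a \<Rightarrow> 'p \<Rightarrow> nat) \<Rightarrow> ('d usym \<Rightarrow> nat \<Rightarrow> nat)
                      \<Rightarrow> (nat \<Rightarrow> nat \<Rightarrow> nat) \<Rightarrow> nat set \<Rightarrow> bool" where
  "dta_wf k Q d0 d1 d2 F \<longleftrightarrow> finite Q \<and> F \<subseteq> Q
     \<and> (\<forall>i\<in>{1..k}. \<forall>a p. d0 i a p \<in> Q)
     \<and> (\<forall>g. \<forall>i\<in>{1..k}. \<forall>j\<in>{1..k}. \<forall>q\<in>Q. d1 (UAdd g i j) q \<in> Q)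
     \<and> (\<forall>i\<in>{1..k}. \<forall>q\<in>Q. d1 (UForget i) q \<in> Q)
     \<and> (\<forall>q\<in>Q. \<forall>q'\<in>Q. d2 q q' \<in> Q)"

end

theory Submission
  imports Defs
begin

definition relE :: "('a, 'p, 'd) stt \<Rightarrow> (bool list \<times> bool list) set" where
  "relE t = {(x, y). \<exists>g. (g, x, y) \<in> edges_of t}"

lemma chi_Atom: "chi_of (Atom i a p) = [i \<mapsto> []]"
  by (simp add: chi_of_def)
lemma relE_Atom: "relE (Atom i a p) = {}"
  by (simp add: relE_def edges_of_def)
lemma chi_AddE: "chi_of (AddE g i j t) = chi_of t"
  by (simp add: chi_of_def split: prod.splits)
lemma relE_AddE: "relE (AddE g i j t) = (if i \<in> dom (chi_of t) \<and> j \<in> dom (chi_of t)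
   then insert (the (chi_of t i), the (chi_of t j)) (relE t) else relE t)"
  by (auto simp add: relE_def edges_of_def chi_of_def split: prod.splits)
lemma chi_Forget: "chi_of (Forget i t) = (chi_of t)(i := None)"
  by (simp add: chi_of_def split: prod.splits)
lemma relE_Forget: "relE (Forget i t) = relE t"
  by (simp add: relE_def edges_of_def split: prod.splits)

definition mp :: "bool \<Rightarrow> (bool list \<times> bool list) set \<Rightarrow> (bool list \<times> bool list) set" where
  "mp b r = (\<lambda>(x, y). (b # x, b # y)) ` r"

lemma chi_Plus: "chi_of (Plus t u) = (\<lambda>c. case chi_of t c of Some v \<Rightarrow> Some (False # v)
                           | None \<Rightarrow> map_option (Cons True) (chi_of u c))"
  unfolding chi_of_def by (simp split: prod.splits)
lemma relE_Plus: "relE (Plus t u) = mp False (relE t) \<union> mp True (relE u)"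
  by (auto simp add: relE_def edges_of_def mp_def split: prod.splits; force)

lemma mem_mp: "(p, q) \<in> mp b r \<longleftrightarrow> (\<exists>x y. p = b # x \<and> q = b # y \<and> (x, y) \<in> r)"
  by (auto simp: mp_def)

lemma mp_rt1:
  assumes "(p, q) \<in> (mp False r1 \<union> mp True r2)\<^sup>*" "p \<noteq> []"
  shows "q \<noteq> [] \<and> hd q = hd p \<and> (tl p, tl q) \<in> (if hd p then r2 else r1)\<^sup>*"
  using assms
proof (induction rule: rtrancl_induct)
  case base then show ?case by simp
next
  case (step y z)
  then show ?case
    by (auto simp: mp_def split: if_splits intro: rtrancl_into_rtrancl)
qed

lemma mp_rt2:
  assumes "(x, y) \<in> r\<^sup>*" "r = (if b then r2 else r1)"
  shows "(b # x, b # y) \<in> (mp False r1 \<union> mp True r2)\<^sup>*"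
  using assms(1)
proof (induction rule: rtrancl_induct)
  case base then show ?case by simp
next
  case (step y z)
  have "(b # y, b # z) \<in> mp False r1 \<union> mp True r2"
    using step(2) assms(2) by (cases b) (auto simp: mp_def)
  then show ?case using step(3) by (meson rtrancl_into_rtrancl)
qed

lemma mp_rtrancl: "(b # x, c # y) \<in> (mp False r1 \<union> mp True r2)\<^sup>* \<longleftrightarrow>
   b = c \<and> (x, y) \<in> (if b then r2 else r1)\<^sup>*"
  using mp_rt1[of "b # x" "c # y" r1 r2] mp_rt2[of x y "if b then r2 else r1" b r2 r1] by auto

lemma acyclic_alt: "acyclic r \<longleftrightarrow> (\<forall>x y. (x, y) \<in> r \<longrightarrow> (y, x) \<notin> r\<^sup>*)"
  by (auto simp: acyclic_def trancl_unfold_left)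

lemma acyclic_mp: "acyclic (mp False r1 \<union> mp True r2) \<longleftrightarrow> acyclic r1 \<and> acyclic r2"
proof -
  have "acyclic (mp False r1 \<union> mp True r2) \<longleftrightarrow>
     (\<forall>x y. (x, y) \<in> r1 \<longrightarrow> (y, x) \<notin> r1\<^sup>*) \<and> (\<forall>x y. (x, y) \<in> r2 \<longrightarrow> (y, x) \<notin> r2\<^sup>*)"
    unfolding acyclic_alt
  proof (intro iffI conjI allI impI)
    fix x y assume H: "\<forall>x y. (x, y) \<in> mp False r1 \<union> mp True r2 \<longrightarrow> (y, x) \<notin> (mp False r1 \<union> mp True r2)\<^sup>*"
    { assume "(x, y) \<in> r1" then show "(y, x) \<notin> r1\<^sup>*"
        using H[rule_format, of "False # x" "False # y"] by (auto simp: mem_mp mp_rtrancl) }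
    { assume "(x, y) \<in> r2" then show "(y, x) \<notin> r2\<^sup>*"
        using H[rule_format, of "True # x" "True # y"] by (auto simp: mem_mp mp_rtrancl) }
  next
    fix x y assume "(\<forall>x y. (x, y) \<in> r1 \<longrightarrow> (y, x) \<notin> r1\<^sup>*) \<and> (\<forall>x y. (x, y) \<in> r2 \<longrightarrow> (y, x) \<notin> r2\<^sup>*)"
      "(x, y) \<in> mp False r1 \<union> mp True r2"
    then show "(y, x) \<notin> (mp False r1 \<union> mp True r2)\<^sup>*"
      by (auto simp: mem_mp mp_rtrancl)
  qed
  then show ?thesis by (simp add: acyclic_alt)
qed


definition Rl :: "('a, 'p, 'd) stt \<Rightarrow> (nat \<times> nat) set" where
  "Rl t = {(a, b). \<exists>u v. chi_of t a = Some u \<and> chi_of t b = Some v \<and> (u, v) \<in> (relE t)\<^sup>*}"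

definition absS :: "('a, 'p, 'd) stt \<Rightarrow> (nat \<times> nat) set option" where
  "absS t = (if legal t \<and> acyclic (relE t) then Some (Rl t) else None)"

lemma Rl_diag: "(a, a) \<in> Rl t \<longleftrightarrow> a \<in> dom (chi_of t)"
  by (auto simp: Rl_def)

definition A0 :: "nat \<Rightarrow> 'a \<Rightarrow> 'p \<Rightarrow> (nat \<times> nat) set option" where
  "A0 i a p = Some {(i, i)}"

fun A1 :: "'d usym \<Rightarrow> (nat \<times> nat) set option \<Rightarrow> (nat \<times> nat) set option" where
  "A1 s None = None"
| "A1 (UAdd g i j) (Some R) = (if (i, i) \<in> R \<and> (j, j) \<in> R then
      (if (j, i) \<in> R then None else Some (R \<union> {(x, y). (x, i) \<in> R \<and> (j, y) \<in> R}))
     else Some R)"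
| "A1 (UForget i) (Some R) = Some {(x, y). (x, y) \<in> R \<and> x \<noteq> i \<and> y \<noteq> i}"

fun A2 :: "(nat \<times> nat) set option \<Rightarrow> (nat \<times> nat) set option \<Rightarrow> (nat \<times> nat) set option" where
  "A2 (Some R1) (Some R2) = (if \<exists>x. (x, x) \<in> R1 \<and> (x, x) \<in> R2 then None else Some (R1 \<union> R2))"
| "A2 _ _ = None"

fun arun :: "(nat \<Rightarrow> 'a \<Rightarrow> 'p \<Rightarrow> 's) \<Rightarrow> ('d usym \<Rightarrow> 's \<Rightarrow> 's)
                 \<Rightarrow> ('s \<Rightarrow> 's \<Rightarrow> 's) \<Rightarrow> ('a, 'p, 'd) stt \<Rightarrow> 's" where
  "arun d0 d1 d2 (Atom i a p) = d0 i a p"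
| "arun d0 d1 d2 (AddE g i j t) = d1 (UAdd g i j) (arun d0 d1 d2 t)"
| "arun d0 d1 d2 (Forget i t) = d1 (UForget i) (arun d0 d1 d2 t)"
| "arun d0 d1 d2 (Plus t u) = d2 (arun d0 d1 d2 t) (arun d0 d1 d2 u)"

lemma arun_correct: "arun A0 A1 A2 t = absS t"
proof (induction t)
  case (Atom i a p)
  then show ?case by (auto simp: A0_def absS_def Rl_def chi_Atom relE_Atom acyclic_def split: if_splits)
next
  case (AddE g i j t)
  show ?case
  proof (cases "legal t \<and> acyclic (relE t)")
    case False
    then have "\<not> (legal (AddE g i j t) \<and> acyclic (relE (AddE g i j t)))"
      by (auto simp: relE_AddE split: if_splits)
    then show ?thesis using AddE False by (simp add: absS_def)
  next
    case True
    then have IH: "arun A0 A1 A2 t = Some (Rl t)" using AddE by (simp add: absS_def)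
    show ?thesis
    proof (cases "i \<in> dom (chi_of t) \<and> j \<in> dom (chi_of t)")
      case False
      then show ?thesis using True IH
        by (auto simp: absS_def Rl_diag relE_AddE Rl_def chi_AddE)
    next
      case c: True
      then obtain u v where u: "chi_of t i = Some u" and v: "chi_of t j = Some v" by auto
      have r: "relE (AddE g i j t) = insert (u, v) (relE t)" using u v by (simp add: relE_AddE domI)
      have ji: "(j, i) \<in> Rl t \<longleftrightarrow> (v, u) \<in> (relE t)\<^sup>*" using u v by (simp add: Rl_def)
      have "Rl (AddE g i j t) = Rl t \<union> {(x, y). (x, i) \<in> Rl t \<and> (j, y) \<in> Rl t}"
        unfolding Rl_def chi_AddE r rtrancl_insert using u v by auto
      then show ?thesis using IH u v ji r True
        by (auto simp: absS_def Rl_diag)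
    qed
  qed
next
  case (Forget i t)
  then show ?case
    by (auto simp: absS_def Rl_def chi_Forget relE_Forget split: if_splits)
next
  case (Plus t u)
  show ?case
  proof (cases "legal t \<and> acyclic (relE t) \<and> legal u \<and> acyclic (relE u)")
    case False
    then have "\<not> (legal (Plus t u) \<and> acyclic (relE (Plus t u)))"
      by (auto simp: relE_Plus acyclic_mp)
    moreover have "arun A0 A1 A2 t = None \<or> arun A0 A1 A2 u = None"
      using Plus False by (auto simp: absS_def)
    ultimately show ?thesis by (auto simp: absS_def)
  next
    case True
    then have IH: "arun A0 A1 A2 t = Some (Rl t)" "arun A0 A1 A2 u = Some (Rl u)"
      using Plus by (auto simp: absS_def)
    show ?thesis
    proof (cases "dom (chi_of t) \<inter> dom (chi_of u) = {}")
      case False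
      then show ?thesis using IH by (auto simp: absS_def Rl_diag)
    next
      case d: True
      have "Rl (Plus t u) = Rl t \<union> Rl u"
      proof (intro set_eqI iffI)
        fix x assume "x \<in> Rl (Plus t u)"
        then show "x \<in> Rl t \<union> Rl u"
          by (auto simp: Rl_def chi_Plus relE_Plus mp_rtrancl split: option.splits)
      next
        fix x assume "x \<in> Rl t \<union> Rl u"
        then show "x \<in> Rl (Plus t u)" using d
          by (auto simp: Rl_def chi_Plus relE_Plus mp_rtrancl split: option.splits)
      qed
      then show ?thesis using IH d True
        by (auto simp: absS_def Rl_diag relE_Plus acyclic_mp)
    qed
  qed
qed


definition SS :: "nat \<Rightarrow> (nat \<times> nat) set option set" where
  "SS k = insert None (Some ` Pow ({1..k} \<times> {1..k}))"

lemma SS_A0: "i \<in> {1..k} \<Longrightarrow> A0 i a p \<in> SS k"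
  by (auto simp: SS_def A0_def)

lemma SS_A1_add: "i \<in> {1..k} \<Longrightarrow> j \<in> {1..k} \<Longrightarrow> q \<in> SS k \<Longrightarrow> A1 (UAdd g i j) q \<in> SS k"
  by (cases q) (auto simp: SS_def image_iff)

lemma SS_A1_forget: "q \<in> SS k \<Longrightarrow> A1 (UForget i) q \<in> SS k"
  by (cases q) (auto simp: SS_def image_iff)

lemma SS_A2: "q \<in> SS k \<Longrightarrow> q' \<in> SS k \<Longrightarrow> A2 q q' \<in> SS k"
  by (cases q; cases q') (auto simp: SS_def image_iff)

lemma card_SS: "card (SS k) = Suc (2 ^ (k * k))"
proof -
  have "card (Some ` Pow ({1..k} \<times> {1..k})) = 2 ^ (k * k)"
    by (simp add: card_image card_Pow card_cartesian_product)
  moreover have "None \<notin> Some ` Pow ({1..k} \<times> {1..k})" by auto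
  ultimately show ?thesis unfolding SS_def by (simp add: card_insert_if)
qed

lemma encode:
  fixes S :: "'s set" and G :: "'s set"
    and a0 :: "nat \<Rightarrow> 'a \<Rightarrow> 'p \<Rightarrow> 's" and a1 :: "'d usym \<Rightarrow> 's \<Rightarrow> 's"
  assumes fin: "finite S" and G: "G \<subseteq> S"
    and c0: "\<And>i a p. i \<in> {1..k} \<Longrightarrow> a0 i a p \<in> S"
    and c1: "\<And>g i j q. i \<in> {1..k} \<Longrightarrow> j \<in> {1..k} \<Longrightarrow> q \<in> S \<Longrightarrow> a1 (UAdd g i j) q \<in> S"
    and c1': "\<And>i q. i \<in> {1..k} \<Longrightarrow> q \<in> S \<Longrightarrow> a1 (UForget i) q \<in> S"
    and c2: "\<And>q q'. q \<in> S \<Longrightarrow> q' \<in> S \<Longrightarrow> a2 q q' \<in> S"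
  shows "\<exists>(Q::nat set) d0 d1 d2 F. dta_wf k Q d0 d1 d2 F \<and> card Q = card S \<and>
     (\<forall>t :: ('a, 'p, 'd) stt. over_k k t \<longrightarrow>
        (dta_run d0 d1 d2 t \<in> F \<longleftrightarrow> arun a0 a1 a2 t \<in> G))"
proof -
  obtain enc where b: "bij_betw enc S {0..<card S}" using ex_bij_betw_finite_nat[OF fin] by blast
  define dec where "dec = inv_into S enc"
  have inj: "inj_on enc S" using b by (simp add: bij_betw_def)
  have encS: "q \<in> S \<Longrightarrow> enc q \<in> {0..<card S}" for q using b by (auto simp: bij_betw_def)
  have dec_enc: "q \<in> S \<Longrightarrow> dec (enc q) = q" for q unfolding dec_def using inj by simp
  have decS: "n \<in> {0..<card S} \<Longrightarrow> dec n \<in> S" for n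
    unfolding dec_def using b by (metis bij_betw_def inv_into_into)
  define d0 where "d0 i a p = enc (a0 i a p)" for i a p
  define d1 where "d1 s n = enc (a1 s (dec n))" for s n
  define d2 where "d2 n n' = enc (a2 (dec n) (dec n'))" for n n'
  have run: "over_k k t \<Longrightarrow> arun a0 a1 a2 t \<in> S \<and> dta_run d0 d1 d2 t = enc (arun a0 a1 a2 t)"
    for t :: "('a, 'p, 'd) stt"
    by (induction t) (simp_all add: d0_def d1_def d2_def dec_enc c0 c1 c1' c2)
  have wf: "dta_wf k {0..<card S} d0 d1 d2 (enc ` G)"
    unfolding dta_wf_def
  proof (intro conjI ballI allI)
    show "finite {0..<card S}" by simp
    show "enc ` G \<subseteq> {0..<card S}" using G encS by blast
  next
    fix i a p assume "i \<in> {1..k}" then show "d0 i a p \<in> {0..<card S}"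
      unfolding d0_def by (intro encS c0)
  next
    fix g i j q assume "i \<in> {1..k}" "j \<in> {1..k}" "q \<in> {0..<card S}"
    then show "d1 (UAdd g i j) q \<in> {0..<card S}"
      unfolding d1_def by (intro encS c1 decS)
  next
    fix i q assume "i \<in> {1..k}" "q \<in> {0..<card S}"
    then show "d1 (UForget i) q \<in> {0..<card S}"
      unfolding d1_def by (intro encS c1' decS)
  next
    fix q q' assume "q \<in> {0..<card S}" "q' \<in> {0..<card S}"
    then show "d2 q q' \<in> {0..<card S}"
      unfolding d2_def by (intro encS c2 decS)
  qed
  show ?thesis
  proof (intro exI conjI allI impI)
    show "dta_wf k {0..<card S} d0 d1 d2 (enc ` G)" by (rule wf)
    show "card {0..<card S} = card S" by simp
  next
    fix t :: "('a, 'p, 'd) stt" assume "over_k k t"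
    then have "arun a0 a1 a2 t \<in> S" "dta_run d0 d1 d2 t = enc (arun a0 a1 a2 t)" using run by auto
    then show "dta_run d0 d1 d2 t \<in> enc ` G \<longleftrightarrow> arun a0 a1 a2 t \<in> G"
      using inj G by (auto simp: inj_on_image_mem_iff)
  qed
qed

theorem mainTheorem9:
  "\<exists>c::nat. \<forall>k::nat. k \<ge> 1 \<longrightarrow>
     (\<exists>(Q::nat set) d0 d1 d2 F.
        dta_wf k Q d0 d1 d2 F \<and> card Q \<le> 2 ^ (c * k ^ 2) \<and>
        (\<forall>t :: ('a::finite, 'p::finite, 'd::finite) stt. over_k k t \<longrightarrow>
           (dta_run d0 d1 d2 t \<in> F \<longleftrightarrow> is_kSTT k t \<and> graph_acyclic t)))"
proof (rule exI[of _ 2], intro allI impI)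
  fix k :: nat assume k: "k \<ge> 1"
  have fin: "finite (SS k)" by (simp add: SS_def)
  have G: "SS k - {None} \<subseteq> SS k" by auto
  obtain Q d0 d1 d2 F where wf: "dta_wf k Q d0 d1 d2 F" and cQ: "card Q = card (SS k)" and
    R: "\<forall>t :: ('a, 'p, 'd) stt. over_k k t \<longrightarrow>
        (dta_run d0 d1 d2 t \<in> F \<longleftrightarrow> arun A0 A1 A2 t \<in> SS k - {None})"
  proof -
    have "\<exists>(Q::nat set) d0 d1 d2 F. dta_wf k Q d0 d1 d2 F \<and> card Q = card (SS k) \<and>
     (\<forall>t :: ('a, 'p, 'd) stt. over_k k t \<longrightarrow>
        (dta_run d0 d1 d2 t \<in> F \<longleftrightarrow> arun A0 A1 A2 t \<in> SS k - {None}))"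
      by (rule encode[OF fin G]) (simp_all add: SS_A0 SS_A1_add SS_A1_forget SS_A2)
    then show ?thesis using that by blast
  qed
  define x :: nat where "x = 2 ^ (k * k)"
  have "1 \<le> k * k" using k by simp
  then have "(2::nat) ^ 1 \<le> 2 ^ (k * k)" by (rule power_increasing) simp
  then have x2: "2 \<le> x" by (simp add: x_def)
  have e: "(2::nat) ^ (2 * k ^ 2) = x * x"
    by (simp add: x_def power2_eq_square mult_2 power_add)
  have "2 * x \<le> x * x" using x2 by simp
  moreover have "card Q = Suc x" using cQ card_SS[of k] by (simp add: x_def)
  ultimately have "card Q \<le> 2 ^ (2 * k ^ 2)" using e x2 by linarith
  moreover have "\<forall>t :: ('a, 'p, 'd) stt. over_k k t \<longrightarrow>
           (dta_run d0 d1 d2 t \<in> F \<longleftrightarrow> is_kSTT k t \<and> graph_acyclic t)"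
  proof (intro allI impI)
    fix t :: "('a, 'p, 'd) stt" assume o: "over_k k t"
    have "arun A0 A1 A2 t \<in> SS k"
    proof -
      have "over_k k t \<Longrightarrow> arun A0 A1 A2 t \<in> SS k" for t :: "('a, 'p, 'd) stt"
        by (induction t) (simp_all add: SS_A0 SS_A1_add SS_A1_forget SS_A2)
      then show ?thesis using o by blast
    qed
    then show "dta_run d0 d1 d2 t \<in> F \<longleftrightarrow> is_kSTT k t \<and> graph_acyclic t"
      using R o arun_correct[of t]
      by (auto simp: absS_def is_kSTT_def graph_acyclic_def relE_def)
  qed
  ultimately show "\<exists>(Q::nat set) d0 d1 d2 F.
        dta_wf k Q d0 d1 d2 F \<and> card Q \<le> 2 ^ (2 * k ^ 2) \<and>
        (\<forall>t :: ('a::finite, 'p::finite, 'd::finite) stt. over_k k t \<longrightarrow>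
           (dta_run d0 d1 d2 t \<in> F \<longleftrightarrow> is_kSTT k t \<and> graph_acyclic t))"
    using wf by blast
qed

end
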